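(* Let $\omega$ be an antisymmetric bivector. For bundles with connection $(E,\nabla_E)$, $(F,\nabla_F)$ and a bundle map $T:E\to F$, define $Q(T)=T+\frac\lambda2\omega^{ij}\nabla_{Fi}\circ\nabla_j(T)$, where $\nabla_j(T)=\nabla_{Fj}\circ T-T\circ\nabla_{Ej}$. Then $Q(T):Q(E)\to Q(F)$ is a left $A_1$-module map (to order $\lambda$). If $T$ intertwines the connections then $Q(T)=T$, which is an $A_1$-bimodule map. In general, for bundle maps $S:E\to F$ and $T:F\to G$ between bundles with connection, $$Q(T\circ S)=Q(T)\circ Q(S)+\tfrac\lambda2\omega^{ij}\nabla_i(T)\circ\nabla_j(S).$$
   Context: Work over $\mathbb{C}[\lambda]/(\lambda^2)$. $A=C^\infty(M)$, coordinates $x^i$, $a_{,i}=\partial a/\partial x^i$, summation convention. $A_1$: $A[\lambda]/(\lambda^2)$ with $a\bullet b=ab+\frac\lambda2\omega^{ij}a_{,i}b_{,j}$. For a bundle $E$ with connection $\nabla_E$ (components $\nabla_{Ei}$ along $\partial_i$), $Q(E)$ is $E$ (sections, $\lambda$-extended) with $a\bullet e=ae+\frac\lambda2\omega^{ij}a_{,i}\nabla_{Ej}e$ and $e\bullet a=ae-\frac\lambda2\omega^{ij}a_{,i}\nabla_{Ej}e$. A left module map $\phi$ satisfies $\phi(a\bullet e)=a\bullet\phi(e)$. *)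

theory Defs
  imports Complex_Main "HOL-Library.Product_Plus"
begin

text \<open>A = C^infty(M) is an abstract commutative (real/complex) algebra
 'a; the coordinate derivatives a |-> a_{,i} (i < n) are maps D i satisfying additivity and
 the Leibniz rule. Sections of a bundle E form an A-module (type 'e, scalar action sE).
 A connection is given by its components nab i (along d/dx^i), additive and Leibniz.
 Elements e0 + lambda e1 of the lambda-extension (mod lambda^2) are pairs (e0, e1).\<close>

definition derivations :: "nat \<Rightarrow> (nat \<Rightarrow> 'a::comm_ring_1 \<Rightarrow> 'a) \<Rightarrow> bool" where
  "derivations n D \<longleftrightarrow> (\<forall>i<n. \<forall>a b. D i (a + b) = D i a + D i b \<and> D i (a * b) = D i a * b + a * D i b)"

definition connection :: "nat \<Rightarrow> (nat \<Rightarrow> 'a::comm_ring_1 \<Rightarrow> 'a) \<Rightarrow> ('a \<Rightarrow> 'e::ab_group_add \<Rightarrow> 'e)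
    \<Rightarrow> (nat \<Rightarrow> 'e \<Rightarrow> 'e) \<Rightarrow> bool" where
  "connection n D s nab \<longleftrightarrow> module s
     \<and> (\<forall>i<n. \<forall>e e'. nab i (e + e') = nab i e + nab i e')
     \<and> (\<forall>i<n. \<forall>a e. nab i (s a e) = s (D i a) e + s a (nab i e))"

definition bundle_map :: "('a::comm_ring_1 \<Rightarrow> 'e::ab_group_add \<Rightarrow> 'e) \<Rightarrow> ('a \<Rightarrow> 'f::ab_group_add \<Rightarrow> 'f)
    \<Rightarrow> ('e \<Rightarrow> 'f) \<Rightarrow> bool" where
  "bundle_map sE sF T \<longleftrightarrow> (\<forall>e e'. T (e + e') = T e + T e') \<and> (\<forall>a e. T (sE a e) = sF a (T e))"

definition nablaT :: "(nat \<Rightarrow> 'f::ab_group_add \<Rightarrow> 'f) \<Rightarrow> (nat \<Rightarrow> 'e \<Rightarrow> 'e) \<Rightarrow> ('e \<Rightarrow> 'f) \<Rightarrow> nat \<Rightarrow> 'e \<Rightarrow> 'f" where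
  "nablaT nF nE T j e = nF j (T e) - T (nE j e)"

definition half :: "'a::real_algebra_1" where
  "half = of_real (1/2)"

definition lmult :: "nat \<Rightarrow> (nat \<Rightarrow> nat \<Rightarrow> 'a::{comm_ring_1,real_algebra_1}) \<Rightarrow> (nat \<Rightarrow> 'a \<Rightarrow> 'a)
    \<Rightarrow> ('a \<Rightarrow> 'e::ab_group_add \<Rightarrow> 'e) \<Rightarrow> (nat \<Rightarrow> 'e \<Rightarrow> 'e) \<Rightarrow> 'a \<times> 'a \<Rightarrow> 'e \<times> 'e \<Rightarrow> 'e \<times> 'e" where
  "lmult n om D s nab x v =
     (s (fst x) (fst v),
      s (fst x) (snd v) + s (snd x) (fst v)
      + (\<Sum>i<n. \<Sum>j<n. s (half * om i j * D i (fst x)) (nab j (fst v))))"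

definition rmult :: "nat \<Rightarrow> (nat \<Rightarrow> nat \<Rightarrow> 'a::{comm_ring_1,real_algebra_1}) \<Rightarrow> (nat \<Rightarrow> 'a \<Rightarrow> 'a)
    \<Rightarrow> ('a \<Rightarrow> 'e::ab_group_add \<Rightarrow> 'e) \<Rightarrow> (nat \<Rightarrow> 'e \<Rightarrow> 'e) \<Rightarrow> 'e \<times> 'e \<Rightarrow> 'a \<times> 'a \<Rightarrow> 'e \<times> 'e" where
  "rmult n om D s nab v x =
     (s (fst x) (fst v),
      s (fst x) (snd v) + s (snd x) (fst v)
      - (\<Sum>i<n. \<Sum>j<n. s (half * om i j * D i (fst x)) (nab j (fst v))))"

definition left_module_map where
  "left_module_map n om D sE nE sF nF \<phi> \<longleftrightarrow>
     (\<forall>v w. \<phi> (v + w) = \<phi> v + \<phi> w) \<and>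
     (\<forall>x v. \<phi> (lmult n om D sE nE x v) = lmult n om D sF nF x (\<phi> v))"

definition bimodule_map where
  "bimodule_map n om D sE nE sF nF \<phi> \<longleftrightarrow>
     left_module_map n om D sE nE sF nF \<phi> \<and>
     (\<forall>x v. \<phi> (rmult n om D sE nE v x) = rmult n om D sF nF (\<phi> v) x)"

definition Qmap :: "nat \<Rightarrow> (nat \<Rightarrow> nat \<Rightarrow> 'a::{comm_ring_1,real_algebra_1}) \<Rightarrow> ('a \<Rightarrow> 'f::ab_group_add \<Rightarrow> 'f)
    \<Rightarrow> (nat \<Rightarrow> 'f \<Rightarrow> 'f) \<Rightarrow> (nat \<Rightarrow> 'e \<Rightarrow> 'e) \<Rightarrow> ('e \<Rightarrow> 'f) \<Rightarrow> 'e \<times> 'e \<Rightarrow> 'f \<times> 'f" where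
  "Qmap n om sF nF nE T v =
     (T (fst v), T (snd v) + (\<Sum>i<n. \<Sum>j<n. sF (half * om i j) (nF i (nablaT nF nE T j (fst v)))))"

definition lift :: "('e \<Rightarrow> 'f) \<Rightarrow> 'e \<times> 'e \<Rightarrow> 'f \<times> 'f" where
  "lift T v = (T (fst v), T (snd v))"

end

theory Submission
  imports Defs
begin

lemma add_sum: fixes f :: "'a::ab_group_add \<Rightarrow> 'b::ab_group_add" assumes "\<And>x y. f (x + y) = f x + f y" shows "f (sum g A) = (\<Sum>x\<in>A. f (g x))"
proof -
  interpret additive f by standard (rule assms)
  show ?thesis by (rule sum)
qed

lemma part1:
  assumes D: "derivations n D"
    and cE: "connection n D sE nE"
    and cF: "connection n D sF nF"
    and T: "bundle_map sE sF T"
  shows "left_module_map n om D sE nE sF nF (Qmap n om sF nF nE T)"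
proof -
  interpret sE: module sE using cE unfolding connection_def by blast
  interpret sF: module sF using cF unfolding connection_def by blast
  have Tadd: "\<And>x y. T (x + y) = T x + T y" and Tlin: "\<And>a e. T (sE a e) = sF a (T e)"
    using T unfolding bundle_map_def by auto
  have nFadd: "\<And>i x y. i < n \<Longrightarrow> nF i (x + y) = nF i x + nF i y"
   and nFl: "\<And>i a x. i < n \<Longrightarrow> nF i (sF a x) = sF (D i a) x + sF a (nF i x)"
    using cF unfolding connection_def by auto
  have nEadd: "\<And>i x y. i < n \<Longrightarrow> nE i (x + y) = nE i x + nE i y"
    using cE unfolding connection_def by auto
  have nEl: "\<And>i a x. i < n \<Longrightarrow> nE i (sE a x) = sE (D i a) x + sE a (nE i x)"
    using cE unfolding connection_def by auto
  have Tdiff: "\<And>x y. T (x - y) = T x - T y"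
    by (metis Tadd add_diff_cancel diff_add_cancel)
  have nFdiff: "\<And>i x y. i < n \<Longrightarrow> nF i (x - y) = nF i x - nF i y"
    by (metis nFadd add_diff_cancel diff_add_cancel)
  have nTlin: "\<And>j a e. j < n \<Longrightarrow> nablaT nF nE T j (sE a e) = sF a (nablaT nF nE T j e)"
    unfolding nablaT_def using nFl nEl Tadd Tlin by (simp add: sF.scale_right_diff_distrib)
  show ?thesis unfolding left_module_map_def
  proof (intro conjI allI)
    fix v w :: "'b \<times> 'b"
    show "Qmap n om sF nF nE T (v + w) = Qmap n om sF nF nE T v + Qmap n om sF nF nE T w"
    proof -
      have "sF (half * om i j) (nF i (nablaT nF nE T j (fst v + fst w)))
         = sF (half * om i j) (nF i (nablaT nF nE T j (fst v))) + sF (half * om i j) (nF i (nablaT nF nE T j (fst w)))"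
        if "i < n" "j < n" for i j
        using that nEadd nFadd Tadd unfolding nablaT_def by (simp add: add_diff_add sF.scale_right_distrib)
      then have "(\<Sum>i<n. \<Sum>j<n. sF (half * om i j) (nF i (nablaT nF nE T j (fst v + fst w))))
         = (\<Sum>i<n. \<Sum>j<n. sF (half * om i j) (nF i (nablaT nF nE T j (fst v))) + sF (half * om i j) (nF i (nablaT nF nE T j (fst w))))"
        by (intro sum.cong refl) auto
      then show ?thesis unfolding Qmap_def
        by (simp add: Tadd sum.distrib algebra_simps)
    qed
  next
    fix x :: "'a \<times> 'a" and v :: "'b \<times> 'b"
    obtain a0 a1 where x: "x = (a0, a1)" by (cases x)
    obtain e0 e1 where v: "v = (e0, e1)" by (cases v)
    have trm: "T (sE (half * om i j * D i a0) (nE j e0))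
        + sF (half * om i j) (nF i (nablaT nF nE T j (sE a0 e0)))
      = sF a0 (sF (half * om i j) (nF i (nablaT nF nE T j e0)))
        + sF (half * om i j * D i a0) (nF j (T e0))" if "i < n" "j < n" for i j
    proof -
      have "nF i (nablaT nF nE T j (sE a0 e0)) = sF (D i a0) (nablaT nF nE T j e0) + sF a0 (nF i (nablaT nF nE T j e0))"
        using that by (simp add: nTlin nFl)
      then show ?thesis using that
        by (simp add: Tlin sF.scale_right_distrib nablaT_def sF.scale_right_diff_distrib mult.commute mult.left_commute)
    qed
    show "Qmap n om sF nF nE T (lmult n om D sE nE x v) = lmult n om D sF nF x (Qmap n om sF nF nE T v)"
      unfolding x v Qmap_def lmult_def
      apply (simp add: Tadd add_sum[where f=T, OF Tadd] Tlin sF.scale_right_distrib sF.scale_sum_right sum.distrib[symmetric])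
      apply (simp add: algebra_simps sum.distrib[symmetric])
      apply (intro sum.cong refl)
      subgoal for i j using trm[of i j] by (simp add: Tlin ac_simps)
      done
  qed
qed

lemma part2:
  assumes cE: "connection n D sE nE"
    and cF: "connection n D sF nF"
    and T: "bundle_map sE sF T"
    and z: "\<forall>j<n. \<forall>e. nablaT nF nE T j e = 0"
  shows "Qmap n om sF nF nE T = lift T \<and> bimodule_map n om D sE nE sF nF (lift T)"
proof -
  interpret sE: module sE using cE unfolding connection_def by blast
  interpret sF: module sF using cF unfolding connection_def by blast
  have Tadd: "\<And>x y. T (x + y) = T x + T y" and Tlin: "\<And>a e. T (sE a e) = sF a (T e)"
    using T unfolding bundle_map_def by auto
  have nFadd: "\<And>i x y. i < n \<Longrightarrow> nF i (x + y) = nF i x + nF i y"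
    using cF unfolding connection_def by auto
  have Tdiff: "\<And>x y. T (x - y) = T x - T y"
    by (metis Tadd add_diff_cancel diff_add_cancel)
  have nF0: "\<And>i. i < n \<Longrightarrow> nF i 0 = 0"
    by (metis nFadd add_cancel_right_right)
  have comm: "\<And>j e. j < n \<Longrightarrow> T (nE j e) = nF j (T e)"
    using z unfolding nablaT_def by auto
  have Tsum: "\<And>g A. T (sum g A) = (\<Sum>x\<in>A. T (g x))"
    by (rule add_sum, rule Tadd)
  have Q: "Qmap n om sF nF nE T = lift T"
  proof
    fix v
    show "Qmap n om sF nF nE T v = lift T v" unfolding Qmap_def lift_def
      by (simp add: z nF0)
  qed
  have S: "(\<Sum>i<n. \<Sum>j<n. T (sE (c i j) (nE j e0))) = (\<Sum>i<n. \<Sum>j<n. sF (c i j) (nF j (T e0)))"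
    for c e0 by (intro sum.cong refl) (simp add: Tlin comm)
  have "bimodule_map n om D sE nE sF nF (lift T)"
    unfolding bimodule_map_def left_module_map_def
  proof (intro conjI allI)
    fix v w show "lift T (v + w) = lift T v + lift T w"
      unfolding lift_def by (simp add: Tadd)
  next
    fix x and v
    show "lift T (lmult n om D sE nE x v) = lmult n om D sF nF x (lift T v)"
      unfolding lift_def lmult_def using S by (simp add: Tadd Tlin Tsum)
    show "lift T (rmult n om D sE nE v x) = rmult n om D sF nF (lift T v) x"
      unfolding lift_def rmult_def using S
      by (simp add: Tadd Tlin Tsum add_sum[where f=T, OF Tadd] Tdiff)
  qed
  with Q show ?thesis by blast
qed

lemma part3:
  assumes cE: "connection n D sE nE"
    and cF: "connection n D sF nF"
    and cG: "connection n D sG nG"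
    and S: "bundle_map sE sF S" and T: "bundle_map sF sG T"
  shows "Qmap n om sG nG nE (T \<circ> S) v =
                   Qmap n om sG nG nF T (Qmap n om sF nF nE S v)
                   + (0, \<Sum>i<n. \<Sum>j<n. sG (half * om i j) (nablaT nG nF T i (nablaT nF nE S j (fst v))))"
proof -
  interpret sF: module sF using cF unfolding connection_def by blast
  interpret sG: module sG using cG unfolding connection_def by blast
  have Tadd: "\<And>x y. T (x + y) = T x + T y" and Tlin: "\<And>a e. T (sF a e) = sG a (T e)"
    using T unfolding bundle_map_def by auto
  have nGadd: "\<And>i x y. i < n \<Longrightarrow> nG i (x + y) = nG i x + nG i y"
    using cG unfolding connection_def by auto
  have Tdiff: "\<And>x y. T (x - y) = T x - T y"
    by (metis Tadd add_diff_cancel diff_add_cancel)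
  have Tsum: "\<And>g A. T (sum g A) = (\<Sum>x\<in>A. T (g x))"
    by (rule add_sum, rule Tadd)
  obtain e0 e1 where v: "v = (e0, e1)" by (cases v)
  have trm: "sG (half * om i j) (nG i (nablaT nG nE (T \<circ> S) j e0))
     = sG (half * om i j) (T (nF i (nablaT nF nE S j e0)))
       + sG (half * om i j) (nG i (nablaT nG nF T j (S e0)))
       + sG (half * om i j) (nablaT nG nF T i (nablaT nF nE S j e0))" if "i < n" for i j
  proof -
    let ?A = "nG j (T (S e0))" and ?X = "nF j (S e0)" and ?Y = "S (nE j e0)"
    have "nG i (?A - T ?Y) = nG i (?A - T ?X) + nG i (T ?X - T ?Y)"
      using nGadd[OF that, of "?A - T ?X" "T ?X - T ?Y"] by simp
    then show ?thesis unfolding nablaT_def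
      by (simp add: Tdiff sG.scale_right_distrib[symmetric])
  qed
  show ?thesis
    unfolding v Qmap_def
    apply (simp add: Tadd Tsum Tlin sum.distrib[symmetric])
    apply (intro sum.cong refl)
    subgoal for i j using trm[of i j] by (simp add: ac_simps)
    done
qed

theorem lemma3p2:
  fixes n :: nat
    and om :: "nat \<Rightarrow> nat \<Rightarrow> 'a::{comm_ring_1,real_algebra_1}"
    and D :: "nat \<Rightarrow> 'a \<Rightarrow> 'a"
    and sE :: "'a \<Rightarrow> 'e::ab_group_add \<Rightarrow> 'e" and nE :: "nat \<Rightarrow> 'e \<Rightarrow> 'e"
    and sF :: "'a \<Rightarrow> 'f::ab_group_add \<Rightarrow> 'f" and nF :: "nat \<Rightarrow> 'f \<Rightarrow> 'f"
    and sG :: "'a \<Rightarrow> 'g::ab_group_add \<Rightarrow> 'g" and nG :: "nat \<Rightarrow> 'g \<Rightarrow> 'g"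
  assumes D: "derivations n D"
    and antisym: "\<forall>i<n. \<forall>j<n. om i j = - om j i"
    and cE: "connection n D sE nE"
    and cF: "connection n D sF nF"
    and cG: "connection n D sG nG"
  shows "(\<forall>T. bundle_map sE sF T \<longrightarrow>
            left_module_map n om D sE nE sF nF (Qmap n om sF nF nE T))
       \<and> (\<forall>T. bundle_map sE sF T \<longrightarrow> (\<forall>j<n. \<forall>e. nablaT nF nE T j e = 0) \<longrightarrow>
            Qmap n om sF nF nE T = lift T \<and> bimodule_map n om D sE nE sF nF (lift T))
       \<and> (\<forall>S T. bundle_map sE sF S \<longrightarrow> bundle_map sF sG T \<longrightarrow>
            (\<forall>v. Qmap n om sG nG nE (T \<circ> S) v =
                   Qmap n om sG nG nF T (Qmap n om sF nF nE S v)
                   + (0, \<Sum>i<n. \<Sum>j<n. sG (half * om i j) (nablaT nG nF T i (nablaT nF nE S j (fst v))))))"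
  using part1[OF D cE cF] part2[OF cE cF] part3[OF cE cF cG] by blast

end
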